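(* Let $\mathcal X\subseteq\Delta_d$ be convex, let $\ell_1,\dots,\ell_T\in[0,1]^d$, and let $R:\mathcal X\to\mathbb R$ be a regularizer that is $1$-strongly convex with respect to a norm $\|\cdot\|$, with dual norm $\|\cdot\|_*$. Run optimistic online mirror descent (OOMD) with learning rate $\eta>0$ on the losses $\ell_t$. Then for any $x^\star\in\mathcal X$ and any nonnegative weights $q_1,\dots,q_{T+1}$, $$\sum_{t=1}^Tq_t\langle x_t-x^\star,\ell_t\rangle\le\frac{q_1D_R(x^\star,\tilde x_0)}{\eta}+\frac1\eta\sum_{t=1}^T(q_{t+1}-q_t)D_R(x^\star,\tilde x_t)+\frac\eta2\sum_{t=1}^Tq_t\|\ell_t-\tilde\ell_t\|_*^2.$$
   Context: OOMD: $\tilde x_0=\arg\min_{x\in\mathcal X}R(x)$; for $t=1,\dots,T$: $x_t=\arg\min_{x\in\mathcal X}\{\langle\tilde\ell_t,x\rangle+\frac1\eta D_R(x,\tilde x_{t-1})\}$ and $\tilde x_t=\arg\min_{x\in\mathcal X}\{\langle\ell_t,x\rangle+\frac1\eta D_R(x,\tilde x_{t-1})\}$, where $\tilde\ell_1=0$ and $\tilde\ell_t=\ell_{t-1}$ for $t\ge2$. $D_R(x,y)=R(x)-R(y)-\langle\nabla R(y),x-y\rangle$ is the Bregman divergence. *)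

theory Defs
  imports "HOL-Analysis.Analysis"
begin

definition prob_simplex :: "(real ^ 'd) set" where
  "prob_simplex = {x. (\<forall>i. 0 \<le> x $ i) \<and> (\<Sum>i\<in>UNIV. x $ i) = 1}"

definition is_norm :: "(real ^ 'd \<Rightarrow> real) \<Rightarrow> bool" where
  "is_norm N \<longleftrightarrow> (\<forall>x. 0 \<le> N x) \<and> (\<forall>x. N x = 0 \<longleftrightarrow> x = 0)
     \<and> (\<forall>c x. N (c *\<^sub>R x) = \<bar>c\<bar> * N x) \<and> (\<forall>x y. N (x + y) \<le> N x + N y)"

definition dual_norm :: "(real ^ 'd \<Rightarrow> real) \<Rightarrow> real ^ 'd \<Rightarrow> real" where
  "dual_norm N y = Sup {y \<bullet> x | x. N x \<le> 1}"

definition strongly_convex_on :: "(real ^ 'd) set \<Rightarrow> (real ^ 'd \<Rightarrow> real) \<Rightarrow> (real ^ 'd \<Rightarrow> real) \<Rightarrow> bool" where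
  "strongly_convex_on X N R \<longleftrightarrow> (\<forall>x\<in>X. \<forall>y\<in>X. \<forall>u::real. 0 \<le> u \<and> u \<le> 1 \<longrightarrow>
     R (u *\<^sub>R x + (1 - u) *\<^sub>R y) \<le> u * R x + (1 - u) * R y - u * (1 - u) / 2 * (N (x - y))\<^sup>2)"

definition bregman :: "(real ^ 'd \<Rightarrow> real) \<Rightarrow> (real ^ 'd \<Rightarrow> real ^ 'd) \<Rightarrow> real ^ 'd \<Rightarrow> real ^ 'd \<Rightarrow> real" where
  "bregman R gR x y = R x - R y - gR y \<bullet> (x - y)"

text \<open>Optimistic loss predictions: tilde-ell_1 = 0, tilde-ell_t = ell_(t-1).\<close>
definition opt_loss :: "(nat \<Rightarrow> real ^ 'd) \<Rightarrow> nat \<Rightarrow> real ^ 'd" where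
  "opt_loss l t = (if t \<le> 1 then 0 else l (t - 1))"

definition oomd :: "(real ^ 'd) set \<Rightarrow> (real ^ 'd \<Rightarrow> real) \<Rightarrow> (real ^ 'd \<Rightarrow> real ^ 'd) \<Rightarrow> real
    \<Rightarrow> (nat \<Rightarrow> real ^ 'd) \<Rightarrow> nat \<Rightarrow> (nat \<Rightarrow> real ^ 'd) \<Rightarrow> (nat \<Rightarrow> real ^ 'd) \<Rightarrow> bool" where
  "oomd X R gR \<eta> l T x xt \<longleftrightarrow>
     is_arg_min R (\<lambda>z. z \<in> X) (xt 0) \<and>
     (\<forall>t\<in>{1..T}.
        is_arg_min (\<lambda>z. opt_loss l t \<bullet> z + bregman R gR z (xt (t - 1)) / \<eta>) (\<lambda>z. z \<in> X) (x t) \<and>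
        is_arg_min (\<lambda>z. l t \<bullet> z + bregman R gR z (xt (t - 1)) / \<eta>) (\<lambda>z. z \<in> X) (xt t))"

end

theory Submission
  imports Defs
begin

lemma norm_neg: assumes "is_norm N" shows "N (- v) = N v"
proof -
  have "N ((-1) *\<^sub>R v) = \<bar>-1\<bar> * N v" using assms unfolding is_norm_def by blast
  then show ?thesis by simp
qed

lemma norm_lower:
  fixes N :: "real ^ 'd \<Rightarrow> real"
  assumes "is_norm N" shows "\<exists>c>0. \<forall>x. c * norm x \<le> N x"
proof -
  have cv: "convex_on UNIV N"
  proof (rule convex_onI)
    fix t x y assume t: "(0::real) < t" "t < 1"
    have "N ((1 - t) *\<^sub>R x + t *\<^sub>R y) \<le> N ((1 - t) *\<^sub>R x) + N (t *\<^sub>R y)"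
      using assms unfolding is_norm_def by blast
    also have "\<dots> = (1 - t) * N x + t * N y"
      using assms t unfolding is_norm_def by simp
    finally show "N ((1 - t) *\<^sub>R x + t *\<^sub>R y) \<le> (1 - t) * N x + t * N y" .
  qed simp
  have cont: "continuous_on (sphere 0 1) N"
    using convex_on_continuous[OF open_UNIV cv] continuous_on_subset by blast
  obtain i :: 'd where True by blast
  have ne: "sphere (0::real^'d) 1 \<noteq> {}"
  proof -
    have "axis i (1::real) \<in> sphere 0 1" by simp
    then show ?thesis by blast
  qed
  obtain m where m: "m \<in> sphere 0 1" "\<forall>y\<in>sphere 0 1. N m \<le> N y"
    using continuous_attains_inf[OF compact_sphere ne cont] by blast
  have m0: "m \<noteq> 0" using m(1) by auto
  have cpos: "N m > 0" using assms m0 unfolding is_norm_def by (metis less_eq_real_def)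
  have "\<forall>x. N m * norm x \<le> N x"
  proof
    fix x :: "real^'d"
    show "N m * norm x \<le> N x"
    proof (cases "x = 0")
      case True then show ?thesis using assms unfolding is_norm_def by simp
    next
      case False
      have u: "x /\<^sub>R norm x \<in> sphere 0 1" using False by simp
      have "N x = N (norm x *\<^sub>R (x /\<^sub>R norm x))" using False by simp
      also have "\<dots> = norm x * N (x /\<^sub>R norm x)" using assms unfolding is_norm_def by simp
      finally have "N x = norm x * N (x /\<^sub>R norm x)" .
      moreover have "N m \<le> N (x /\<^sub>R norm x)" using m(2) u by blast
      ultimately show ?thesis by (metis mult.commute mult_left_mono norm_ge_zero)
    qed
  qed
  then show ?thesis using cpos by blast
qed

lemma dual_bound:
  fixes N :: "real ^ 'd \<Rightarrow> real"
  assumes "is_norm N" shows "y \<bullet> x \<le> dual_norm N y * N x"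
proof -
  obtain c where c: "c > 0" "\<forall>x. c * norm x \<le> N x" using norm_lower[OF assms] by blast
  have bdd: "bdd_above {y \<bullet> x | x. N x \<le> 1}"
  proof (rule bdd_aboveI)
    fix v assume "v \<in> {y \<bullet> x | x. N x \<le> 1}"
    then obtain z where z: "v = y \<bullet> z" "N z \<le> 1" by blast
    have "c * norm z \<le> 1" using c(2) z(2) by (meson order_trans)
    hence nz: "norm z \<le> 1 / c" using c(1) by (simp add: field_simps)
    have "v \<le> norm y * norm z" using z(1) Cauchy_Schwarz_ineq2 by (metis abs_le_D1)
    also have "\<dots> \<le> norm y * (1 / c)" using nz by (intro mult_left_mono) auto
    finally show "v \<le> norm y * (1 / c)" .
  qed
  show ?thesis
  proof (cases "N x = 0")
    case True
    then have "x = 0" using assms unfolding is_norm_def by blast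
    then show ?thesis using True by simp
  next
    case False
    then have pos: "N x > 0" using assms unfolding is_norm_def by (metis less_eq_real_def)
    have "N (x /\<^sub>R N x) = \<bar>inverse (N x)\<bar> * N x" using assms unfolding is_norm_def by blast
    then have "N (x /\<^sub>R N x) = 1" using pos by simp
    then have "y \<bullet> (x /\<^sub>R N x) \<le> dual_norm N y"
      unfolding dual_norm_def by (intro cSup_upper[OF _ bdd]) (rule CollectI, rule exI[of _ "x /\<^sub>R N x"], simp)
    then have "(y \<bullet> x) / N x \<le> dual_norm N y" by (simp add: inner_scaleR_right divide_inverse mult.commute)
    then show ?thesis using pos by (simp add: divide_le_eq)
  qed
qed

lemma deriv_le:
  fixes \<rho> g :: "real \<Rightarrow> real"
  assumes "(\<rho> has_real_derivative c) (at 0 within {0..1})"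
    and "(g \<longlongrightarrow> G) (at 0 within {0..1})"
    and "\<forall>u\<in>{0<..1}. (\<rho> u - \<rho> 0) / u \<le> g u"
  shows "c \<le> G"
proof -
  have A: "((\<lambda>y. (\<rho> y - \<rho> 0) / (y - 0)) \<longlongrightarrow> c) (at_right 0)"
    using assms(1) unfolding has_field_derivative_iff at_within_Icc_at_right[OF zero_less_one] .
  have B: "(g \<longlongrightarrow> G) (at_right 0)"
    using assms(2) unfolding at_within_Icc_at_right[OF zero_less_one] .
  have ev: "eventually (\<lambda>y. (\<rho> y - \<rho> 0) / (y - 0) \<le> g y) (at_right (0::real))"
    unfolding eventually_at_right_field using assms(3) by (intro exI[of _ 1]) auto
  show ?thesis by (rule tendsto_le[OF _ B A ev]) simp
qed

lemma deriv_ge: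
  fixes \<rho> :: "real \<Rightarrow> real"
  assumes "(\<rho> has_real_derivative c) (at 0 within {0..1})"
    and "\<forall>u\<in>{0<..1}. B \<le> (\<rho> u - \<rho> 0) / u"
  shows "B \<le> c"
proof -
  have A: "((\<lambda>y. (\<rho> y - \<rho> 0) / (y - 0)) \<longlongrightarrow> c) (at_right 0)"
    using assms(1) unfolding has_field_derivative_iff at_within_Icc_at_right[OF zero_less_one] .
  have ev: "eventually (\<lambda>y. B \<le> (\<rho> y - \<rho> 0) / (y - 0)) (at_right (0::real))"
    unfolding eventually_at_right_field using assms(2) by (intro exI[of _ 1]) auto
  show ?thesis by (rule tendsto_le[OF _ A tendsto_const ev]) simp
qed

lemma seg_in:
  assumes "convex X" "a \<in> X" "z \<in> X" "0 \<le> u" "u \<le> (1::real)"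
  shows "a + u *\<^sub>R (z - a) \<in> X"
proof -
  have "a + u *\<^sub>R (z - a) = (1 - u) *\<^sub>R a + u *\<^sub>R z" by (simp add: algebra_simps)
  then show ?thesis using assms convex_alt by metis
qed

lemma seg_deriv:
  fixes R :: "real ^ 'd \<Rightarrow> real"
  assumes "convex X" "\<forall>y\<in>X. (R has_derivative (\<lambda>h. gR y \<bullet> h)) (at y within X)" "a \<in> X" "z \<in> X"
  shows "((\<lambda>u. R (a + u *\<^sub>R (z - a))) has_real_derivative (gR a \<bullet> (z - a))) (at 0 within {0..1})"
proof -
  have f: "((\<lambda>u. a + u *\<^sub>R (z - a)) has_derivative (\<lambda>h. h *\<^sub>R (z - a))) (at 0 within {0..1})"
    by (auto intro!: derivative_eq_intros)
  have im: "(\<lambda>u. a + u *\<^sub>R (z - a)) ` {0..1} \<subseteq> X" using seg_in[OF assms(1,3,4)] by auto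
  have "((\<lambda>u. R (a + u *\<^sub>R (z - a))) has_derivative (\<lambda>h. gR (a + 0 *\<^sub>R (z - a)) \<bullet> (h *\<^sub>R (z - a)))) (at 0 within {0..1})"
    by (rule has_derivative_in_compose2[of X R "\<lambda>y h. gR y \<bullet> h", OF _ im _ f]) (use assms(2) in auto)
  moreover have "(\<lambda>h. gR (a + 0 *\<^sub>R (z - a)) \<bullet> (h *\<^sub>R (z - a))) = (*) (gR a \<bullet> (z - a))"
    by (auto simp: inner_scaleR_right mult.commute)
  ultimately show ?thesis unfolding has_field_derivative_def by simp
qed


lemma breg_lower:
  fixes R :: "real ^ 'd \<Rightarrow> real"
  assumes "convex X" "\<forall>y\<in>X. (R has_derivative (\<lambda>h. gR y \<bullet> h)) (at y within X)"
    "strongly_convex_on X N R" "x \<in> X" "y \<in> X"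
  shows "(N (x - y))\<^sup>2 / 2 \<le> bregman R gR x y"
proof -
  define K where "K = (N (x - y))\<^sup>2"
  have d: "((\<lambda>u. R (y + u *\<^sub>R (x - y))) has_real_derivative (gR y \<bullet> (x - y))) (at 0 within {0..1})"
    by (rule seg_deriv[OF assms(1,2,5,4)])
  have lim: "((\<lambda>u. R x - R y - (1 - u) / 2 * K) \<longlongrightarrow> R x - R y - (1 - 0) / 2 * K) (at 0 within {0..1})"
    by (intro tendsto_intros) simp
  have bnd: "\<forall>u\<in>{0<..1}. (R (y + u *\<^sub>R (x - y)) - R (y + 0 *\<^sub>R (x - y))) / u \<le> R x - R y - (1 - u) / 2 * K"
  proof
    fix u :: real assume u: "u \<in> {0<..1}"
    have e: "y + u *\<^sub>R (x - y) = u *\<^sub>R x + (1 - u) *\<^sub>R y" by (simp add: algebra_simps)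
    have "R (u *\<^sub>R x + (1 - u) *\<^sub>R y) \<le> u * R x + (1 - u) * R y - u * (1 - u) / 2 * K"
      using assms(3,4,5) u unfolding strongly_convex_on_def K_def by auto
    then have "R (y + u *\<^sub>R (x - y)) - R y \<le> u * (R x - R y - (1 - u) / 2 * K)"
      unfolding e by (simp add: algebra_simps)
    then show "(R (y + u *\<^sub>R (x - y)) - R (y + 0 *\<^sub>R (x - y))) / u \<le> R x - R y - (1 - u) / 2 * K"
      using u by (simp add: divide_le_eq mult.commute)
  qed
  have "gR y \<bullet> (x - y) \<le> R x - R y - (1 - 0) / 2 * K"
    by (rule deriv_le[OF d lim bnd])
  then show ?thesis unfolding bregman_def K_def by simp
qed

lemma mult_aux:
  fixes p s p' s' \<eta> :: real
  assumes "p + s / \<eta> \<le> p' + s' / \<eta>" "\<eta> > 0"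
  shows "0 \<le> \<eta> * (p' - p) + (s' - s)"
proof -
  have "\<eta> * (p + s / \<eta>) \<le> \<eta> * (p' + s' / \<eta>)" using assms by (intro mult_left_mono) auto
  then show ?thesis using assms(2) by (simp add: distrib_left algebra_simps)
qed

lemma first_order:
  fixes R :: "real ^ 'd \<Rightarrow> real"
  assumes "convex X" "\<forall>y\<in>X. (R has_derivative (\<lambda>h. gR y \<bullet> h)) (at y within X)"
    "\<eta> > 0"
    "is_arg_min (\<lambda>z. v \<bullet> z + bregman R gR z y / \<eta>) (\<lambda>z. z \<in> X) a" "z \<in> X"
  shows "v \<bullet> (a - z) \<le> (bregman R gR z y - bregman R gR z a - bregman R gR a y) / \<eta>"
proof -
  have aX: "a \<in> X" using assms(4) unfolding is_arg_min_def by blast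
  have min: "\<And>w. w \<in> X \<Longrightarrow> v \<bullet> a + bregman R gR a y / \<eta> \<le> v \<bullet> w + bregman R gR w y / \<eta>"
    using assms(4) unfolding is_arg_min_def by (meson not_less)
  have d: "((\<lambda>u. R (a + u *\<^sub>R (z - a))) has_real_derivative (gR a \<bullet> (z - a))) (at 0 within {0..1})"
    by (rule seg_deriv[OF assms(1,2) aX assms(5)])
  have bnd: "\<forall>u\<in>{0<..1}. gR y \<bullet> (z - a) - \<eta> * (v \<bullet> (z - a)) \<le> (R (a + u *\<^sub>R (z - a)) - R (a + 0 *\<^sub>R (z - a))) / u"
  proof
    fix u :: real assume u: "u \<in> {0<..1}"
    have "v \<bullet> a + bregman R gR a y / \<eta> \<le> v \<bullet> (a + u *\<^sub>R (z - a)) + bregman R gR (a + u *\<^sub>R (z - a)) y / \<eta>"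
      using min seg_in[OF assms(1) aX assms(5)] u by auto
    then have "0 \<le> \<eta> * (v \<bullet> (a + u *\<^sub>R (z - a)) - v \<bullet> a) + (bregman R gR (a + u *\<^sub>R (z - a)) y - bregman R gR a y)"
      using assms(3) by (rule mult_aux)
    then have "0 \<le> u * (\<eta> * (v \<bullet> (z - a))) + (R (a + u *\<^sub>R (z - a)) - R a - u * (gR y \<bullet> (z - a)))"
      unfolding bregman_def by (simp add: algebra_simps inner_diff_right inner_add_right)
    then have "u * (gR y \<bullet> (z - a) - \<eta> * (v \<bullet> (z - a))) \<le> R (a + u *\<^sub>R (z - a)) - R a"
      by (simp add: algebra_simps)
    then show "gR y \<bullet> (z - a) - \<eta> * (v \<bullet> (z - a)) \<le> (R (a + u *\<^sub>R (z - a)) - R (a + 0 *\<^sub>R (z - a))) / u"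
      using u by (simp add: le_divide_eq mult.commute)
  qed
  have c: "gR y \<bullet> (z - a) - \<eta> * (v \<bullet> (z - a)) \<le> gR a \<bullet> (z - a)"
    by (rule deriv_ge[OF d bnd])
  have three: "bregman R gR z y - bregman R gR z a - bregman R gR a y = (gR a - gR y) \<bullet> (z - a)"
    unfolding bregman_def by (simp add: algebra_simps inner_diff_right inner_diff_left)
  have "\<eta> * (v \<bullet> (a - z)) \<le> (gR a - gR y) \<bullet> (z - a)"
    using c by (simp add: algebra_simps inner_diff_right inner_diff_left)
  then show ?thesis unfolding three using assms(3) by (simp add: le_divide_eq mult.commute)
qed

lemma telescope:
  fixes q D :: "nat \<Rightarrow> real"
  shows "(\<Sum>t=1..T. q t * (D (t - 1) - D t)) = q 1 * D 0 + (\<Sum>t=1..T. (q (t + 1) - q t) * D t) - q (T + 1) * D T"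
  by (induction T) (auto simp: algebra_simps)


lemma amgm_aux:
  fixes a b \<eta> :: real assumes "\<eta> > 0"
  shows "a * b \<le> \<eta> / 2 * a\<^sup>2 + b\<^sup>2 / 2 / \<eta>"
proof -
  have "0 \<le> (\<eta> * a - b)\<^sup>2" by simp
  then have "2 * \<eta> * (a * b) \<le> \<eta> * \<eta> * a\<^sup>2 + b\<^sup>2" by (simp add: power2_eq_square algebra_simps)
  then have "(2 * \<eta> * (a * b)) / (2 * \<eta>) \<le> (\<eta> * \<eta> * a\<^sup>2 + b\<^sup>2) / (2 * \<eta>)"
    using assms by (intro divide_right_mono) auto
  then show ?thesis using assms by (simp add: add_divide_distrib power2_eq_square)
qed

theorem lemma3:
  fixes X :: "(real ^ 'd) set"
    and R :: "real ^ 'd \<Rightarrow> real" and gR :: "real ^ 'd \<Rightarrow> real ^ 'd"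
    and N :: "real ^ 'd \<Rightarrow> real"
    and \<eta> :: real and T :: nat
    and l x xt :: "nat \<Rightarrow> real ^ 'd"
    and q :: "nat \<Rightarrow> real" and xstar :: "real ^ 'd"
  assumes "convex X" and "X \<subseteq> prob_simplex"
    and "\<forall>t\<in>{1..T}. \<forall>i. 0 \<le> l t $ i \<and> l t $ i \<le> 1"
    and "is_norm N"
    and "\<forall>y\<in>X. (R has_derivative (\<lambda>h. gR y \<bullet> h)) (at y within X)"
    and "strongly_convex_on X N R"
    and "\<eta> > 0"
    and "oomd X R gR \<eta> l T x xt"
    and "xstar \<in> X"
    and "\<forall>t\<in>{1..T+1}. 0 \<le> q t"
  shows "(\<Sum>t=1..T. q t * ((x t - xstar) \<bullet> l t))
    \<le> q 1 * bregman R gR xstar (xt 0) / \<eta>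
       + (1 / \<eta>) * (\<Sum>t=1..T. (q (t + 1) - q t) * bregman R gR xstar (xt t))
       + (\<eta> / 2) * (\<Sum>t=1..T. q t * (dual_norm N (l t - opt_loss l t))\<^sup>2)"
proof -
  note cX = assms(1) and nN = assms(4) and dR = assms(5) and sc = assms(6) and eta = assms(7)
  define D where "D a b = bregman R gR a b" for a b
  define dn where "dn t = dual_norm N (l t - opt_loss l t)" for t
  have x0: "xt 0 \<in> X" using assms(8) unfolding oomd_def is_arg_min_def by blast
  have am1: "\<And>t. t \<in> {1..T} \<Longrightarrow> is_arg_min (\<lambda>z. opt_loss l t \<bullet> z + bregman R gR z (xt (t - 1)) / \<eta>) (\<lambda>z. z \<in> X) (x t)"
    using assms(8) unfolding oomd_def by blast
  have am2: "\<And>t. t \<in> {1..T} \<Longrightarrow> is_arg_min (\<lambda>z. l t \<bullet> z + bregman R gR z (xt (t - 1)) / \<eta>) (\<lambda>z. z \<in> X) (xt t)"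
    using assms(8) unfolding oomd_def by blast
  have xtX: "\<And>t. t \<le> T \<Longrightarrow> xt t \<in> X"
  proof -
    fix t assume "t \<le> T"
    show "xt t \<in> X"
    proof (cases "t = 0")
      case True then show ?thesis using x0 by simp
    next
      case False then show ?thesis using am2[of t] \<open>t \<le> T\<close> unfolding is_arg_min_def by auto
    qed
  qed
  have round: "(x t - xstar) \<bullet> l t \<le> (D xstar (xt (t - 1)) - D xstar (xt t)) / \<eta> + \<eta> / 2 * (dn t)\<^sup>2"
    if t: "t \<in> {1..T}" for t
  proof -
    let ?y = "xt (t - 1)" and ?m = "opt_loss l t"
    have yX: "?y \<in> X" using xtX t by auto
    have xX: "x t \<in> X" using am1[OF t] unfolding is_arg_min_def by blast
    have tX: "xt t \<in> X" using xtX t by auto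
    have F1: "l t \<bullet> (xt t - xstar) \<le> (D xstar ?y - D xstar (xt t) - D (xt t) ?y) / \<eta>"
      unfolding D_def by (rule first_order[OF cX dR eta am2[OF t] assms(9)])
    have F2: "?m \<bullet> (x t - xt t) \<le> (D (xt t) ?y - D (xt t) (x t) - D (x t) ?y) / \<eta>"
      unfolding D_def by (rule first_order[OF cX dR eta am1[OF t] tX])
    have C: "(l t - ?m) \<bullet> (x t - xt t) \<le> dn t * N (x t - xt t)"
      unfolding dn_def by (rule dual_bound[OF nN])
    have AM: "dn t * N (x t - xt t) \<le> \<eta> / 2 * (dn t)\<^sup>2 + (N (x t - xt t))\<^sup>2 / 2 / \<eta>"
      by (rule amgm_aux[OF eta])
    have "N (xt t - x t) = N (x t - xt t)" using norm_neg[OF nN, of "x t - xt t"] by simp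
    then have B1: "(N (x t - xt t))\<^sup>2 / 2 \<le> D (xt t) (x t)"
      using breg_lower[OF cX dR sc tX xX] unfolding D_def by simp
    then have B1': "(N (x t - xt t))\<^sup>2 / 2 / \<eta> \<le> D (xt t) (x t) / \<eta>"
      using eta by (intro divide_right_mono) auto
    have B2: "0 \<le> D (x t) ?y / \<eta>"
      using breg_lower[OF cX dR sc xX yX] eta unfolding D_def
      by (metis divide_nonneg_pos divide_nonneg_nonneg order_trans zero_le_power2 zero_le_numeral)
    have sp: "(x t - xstar) \<bullet> l t = (l t - ?m) \<bullet> (x t - xt t) + ?m \<bullet> (x t - xt t) + l t \<bullet> (xt t - xstar)"
      by (simp add: inner_diff_left inner_diff_right inner_commute)
    show ?thesis
      using F1 F2 C AM B1' B2 unfolding sp diff_divide_distrib by linarith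
  qed
  have "(\<Sum>t=1..T. q t * ((x t - xstar) \<bullet> l t))
      \<le> (\<Sum>t=1..T. q t * ((D xstar (xt (t - 1)) - D xstar (xt t)) / \<eta> + \<eta> / 2 * (dn t)\<^sup>2))"
    using round assms(10) by (intro sum_mono mult_left_mono) auto
  also have "\<dots> = (1 / \<eta>) * (\<Sum>t=1..T. q t * (D xstar (xt (t - 1)) - D xstar (xt t)))
       + (\<eta> / 2) * (\<Sum>t=1..T. q t * (dn t)\<^sup>2)"
  proof -
    have "\<And>t. q t * ((D xstar (xt (t - 1)) - D xstar (xt t)) / \<eta> + \<eta> / 2 * (dn t)\<^sup>2)
        = (1 / \<eta>) * (q t * (D xstar (xt (t - 1)) - D xstar (xt t))) + (\<eta> / 2) * (q t * (dn t)\<^sup>2)"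
      by (simp add: algebra_simps diff_divide_distrib)
    then show ?thesis by (simp only: sum.distrib sum_distrib_left)
  qed
  also have "(\<Sum>t=1..T. q t * (D xstar (xt (t - 1)) - D xstar (xt t)))
      = q 1 * D xstar (xt 0) + (\<Sum>t=1..T. (q (t + 1) - q t) * D xstar (xt t)) - q (T + 1) * D xstar (xt T)"
    by (rule telescope)
  also have "q (T + 1) * D xstar (xt T) \<ge> 0"
  proof -
    have "0 \<le> D xstar (xt T)" using breg_lower[OF cX dR sc assms(9) xtX[of T]] unfolding D_def
      by (metis divide_nonneg_nonneg order_trans zero_le_power2 zero_le_numeral order_refl)
    moreover have "0 \<le> q (T + 1)" using assms(10) by auto
    ultimately show ?thesis by simp
  qed
  then have "(1 / \<eta>) * (q 1 * D xstar (xt 0) + (\<Sum>t=1..T. (q (t + 1) - q t) * D xstar (xt t)) - q (T + 1) * D xstar (xt T))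
      \<le> (1 / \<eta>) * (q 1 * D xstar (xt 0) + (\<Sum>t=1..T. (q (t + 1) - q t) * D xstar (xt t)))"
    using eta by (intro mult_left_mono) auto
  finally show ?thesis unfolding D_def dn_def by (simp add: algebra_simps)
qed

end
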